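(* For every $i\in\mathbb N$, the subgroup $G_i^\infty=\langle a_i,a_{i+1},\dots\rangle$ of $G'$ is undistorted: for every element of $G_i^\infty$, its word length with respect to $\{a_i,a_{i+1},\dots\}$ equals its word length in $G'$ with respect to $\{a_0,a_1,\dots\}$.
   Context: Fix an integer $p\ge20$. $G'=\langle a_0,a_1,a_2,\dots\mid a_j^{-1}a_{j-1}a_j=a_{j-1}^p\ (j\ge1)\rangle$, with word metric relative to $\{a_0,a_1,\dots\}$. *)

theory Defs
  imports Main
begin

text \<open>Letters of the free group on generators a_0, a_1, ...:
  (False, n) stands for a_n and (True, n) stands for a_n^{-1}.\<close>
type_synonym letter = "bool \<times> nat"

definition inv_letter :: "letter \<Rightarrow> letter" where
  "inv_letter x = (\<not> fst x, snd x)"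

definition relator :: "nat \<Rightarrow> nat \<Rightarrow> letter list" where
  "relator p j = [(True, j), (False, j - 1), (False, j)] @ replicate p (True, j - 1)"

text \<open>Two words represent the same element of
  G' = < a_0, a_1, ... | a_j^{-1} a_{j-1} a_j = a_{j-1}^p (j \<ge> 1) >:
  the congruence generated by free cancellation and the relators.\<close>
inductive geq :: "nat \<Rightarrow> letter list \<Rightarrow> letter list \<Rightarrow> bool" for p where
  geq_refl: "geq p u u"
| geq_sym: "geq p u v \<Longrightarrow> geq p v u"
| geq_trans: "geq p u v \<Longrightarrow> geq p v w \<Longrightarrow> geq p u w"
| geq_cancel: "geq p (u @ [x, inv_letter x] @ v) (u @ v)"
| geq_rel: "1 \<le> j \<Longrightarrow> geq p (u @ relator p j @ v) (u @ v)"

definition wlen :: "nat \<Rightarrow> nat set \<Rightarrow> letter list \<Rightarrow> nat" where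
  "wlen p S w = (LEAST n. \<exists>v. snd ` set v \<subseteq> S \<and> length v = n \<and> geq p v w)"

end

theory Submission
  imports Defs
begin

definition er :: "nat \<Rightarrow> letter list \<Rightarrow> letter list" where
  "er i = filter (\<lambda>x. i \<le> snd x)"

lemma er_rel: "geq p (er i (u @ relator p j @ v)) (er i (u @ v))" if "1 \<le> j"
proof -
  consider "j < i" | "j = i" | "i < j" by linarith
  then show ?thesis
  proof cases
    case 1
    then have "er i (relator p j) = []" by (auto simp: er_def relator_def)
    then show ?thesis by (simp add: er_def geq_refl)
  next
    case 2
    then have "er i (relator p j) = [(True, i), inv_letter (True, i)]"
      using that by (auto simp: er_def relator_def inv_letter_def)
    then show ?thesis using geq_cancel[of p "er i u" "(True,i)" "er i v"]
      by (simp add: er_def)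
  next
    case 3
    then have "er i (relator p j) = relator p j"
      by (auto simp: er_def relator_def)
    then show ?thesis using geq_rel[OF that, of p "er i u" "er i v"]
      by (simp add: er_def)
  qed
qed

lemma geq_er: "geq p u v \<Longrightarrow> geq p (er i u) (er i v)"
proof (induction rule: geq.induct)
  case (geq_refl u) then show ?case by (rule geq.geq_refl)
next
  case (geq_sym u v) then show ?case by (blast intro: geq.geq_sym)
next
  case (geq_trans u v w) then show ?case by (blast intro: geq.geq_trans)
next
  case (geq_cancel u x v)
  show ?case
  proof (cases "i \<le> snd x")
    case True
    then show ?thesis using geq.geq_cancel[of p "er i u" x "er i v"]
      by (simp add: er_def inv_letter_def)
  next
    case False
    then show ?thesis by (simp add: er_def inv_letter_def geq.geq_refl)
  qed
next
  case (geq_rel j u v) then show ?case by (rule er_rel)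
qed

theorem corollary5p3:
  fixes p i :: nat and w :: "letter list"
  assumes "p \<ge> 20"
    and "snd ` set w \<subseteq> {i..}"
  shows "wlen p {i..} w = wlen p UNIV w"
proof -
  have ex: "\<exists>v. snd ` set v \<subseteq> UNIV \<and> length v = length w \<and> geq p v w"
    using geq_refl by blast
  obtain v where v: "length v = wlen p UNIV w" "geq p v w"
    using LeastI_ex[of "\<lambda>n. \<exists>v. snd ` set v \<subseteq> UNIV \<and> length v = n \<and> geq p v w"] ex
    unfolding wlen_def by blast
  have ew: "er i w = w" using assms(2) unfolding er_def by (auto intro!: filter_True)
  have "geq p (er i v) w" using geq_er[OF v(2), of i] ew by simp
  moreover have "snd ` set (er i v) \<subseteq> {i..}" by (auto simp: er_def)
  ultimately have "wlen p {i..} w \<le> length (er i v)"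
    unfolding wlen_def by (intro Least_le) blast
  also have "\<dots> \<le> length v" by (simp add: er_def)
  finally have 1: "wlen p {i..} w \<le> wlen p UNIV w" using v by simp
  have ex2: "\<exists>v. snd ` set v \<subseteq> {i..} \<and> length v = length w \<and> geq p v w"
    using geq_refl assms(2) by blast
  obtain u where u: "snd ` set u \<subseteq> {i..}" "length u = wlen p {i..} w" "geq p u w"
    using LeastI_ex[of "\<lambda>n. \<exists>v. snd ` set v \<subseteq> {i..} \<and> length v = n \<and> geq p v w"] ex2
    unfolding wlen_def by blast
  have "wlen p UNIV w \<le> length u"
    unfolding wlen_def using u by (intro Least_le) blast
  with 1 u show ?thesis by simp
qed

end
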